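(* Let $N\ge2$, $\Lambda_0>0$, and let $\lambda:\mathbb R\to[0,\Lambda_0]$ be a nonincreasing measurable function. Let $c_1,c_2>0$ satisfy $c_1\Lambda_0\le1/2$ and $c_2\Lambda_0\le(N-1)/2$, and put $M=N-c_2\Lambda_0$. Then for all $s,t\in\mathbb R$, $$\int_{-\infty}^\infty\!\int_{-\infty}^\infty E(t,\tau,\sigma)\,\Sigma^+(s,\sigma)\,d\sigma\,d\tau\le c\,\Sigma^+(s,t),\qquad \int_{-\infty}^\infty\!\int_{-\infty}^\infty E(t,\tau,\sigma)\,\Sigma^-(\sigma,s)\,d\sigma\,d\tau\le c\,\Sigma^-(t,s),$$ where $c=2\big(\frac{3\Lambda_0}{M}+\frac1{c_1}+\frac1{c_2}\big)^2$.
   Context: For $m,n\ge0$, $Q^{m,n}(t)=t^m$ for $0<t\le1$ and $Q^{m,n}(t)=t^n$ for $t>1$. Define $E(\tau,\sigma)=\lambda(\tau)^2e^{N(\tau-\sigma)}$ if $\tau\le\sigma$ and $E(\tau,\sigma)=\lambda(\tau)\big(\lambda(\tau)e^{\sigma-\tau}+\lambda(\sigma)\big)$ if $\tau\ge\sigma$, and $E(t,\tau,\sigma)=Q^{N,0}(e^{t-\tau})\,E(\tau,\sigma)$. Define $\Sigma^{\pm}(s,\sigma)=\exp\big(\pm c_1\int_s^\sigma\lambda(\nu)\,d\nu\big)$ if $s\le\sigma$ and $\Sigma^{\pm}(s,\sigma)=\exp\big(\pm M(\sigma-s)\big)$ if $s\ge\sigma$. (In the paper $\lambda(\nu)=\Lambda(e^{-\nu})$,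 where $\Lambda$ is an increasing local Lipschitz modulus bounded by $\Lambda_0$.) *)

theory Defs
  imports "HOL-Analysis.Analysis"
begin

text \<open>Q^{m,n}(t) = t^m for 0 < t <= 1 and t^n for t > 1 (only used for t > 0).\<close>
definition Qmn :: "nat \<Rightarrow> nat \<Rightarrow> real \<Rightarrow> real" where
  "Qmn m n t = (if t \<le> 1 then t ^ m else t ^ n)"

definition Ekern :: "nat \<Rightarrow> (real \<Rightarrow> real) \<Rightarrow> real \<Rightarrow> real \<Rightarrow> real" where
  "Ekern N lam \<tau> \<sigma> =
     (if \<tau> \<le> \<sigma> then (lam \<tau>)\<^sup>2 * exp (real N * (\<tau> - \<sigma>))
      else lam \<tau> * (lam \<tau> * exp (\<sigma> - \<tau>) + lam \<sigma>))"

definition Ekern3 :: "nat \<Rightarrow> (real \<Rightarrow> real) \<Rightarrow> real \<Rightarrow> real \<Rightarrow> real \<Rightarrow> real" where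
  "Ekern3 N lam t \<tau> \<sigma> = Qmn N 0 (exp (t - \<tau>)) * Ekern N lam \<tau> \<sigma>"

definition SigmaP :: "real \<Rightarrow> real \<Rightarrow> (real \<Rightarrow> real) \<Rightarrow> real \<Rightarrow> real \<Rightarrow> real" where
  "SigmaP c1 M lam s \<sigma> =
     (if s \<le> \<sigma> then exp (c1 * (LINT \<nu>:{s..\<sigma>}|lborel. lam \<nu>))
      else exp (M * (\<sigma> - s)))"

definition SigmaM :: "real \<Rightarrow> real \<Rightarrow> (real \<Rightarrow> real) \<Rightarrow> real \<Rightarrow> real \<Rightarrow> real" where
  "SigmaM c1 M lam s \<sigma> =
     (if s \<le> \<sigma> then exp (- (c1 * (LINT \<nu>:{s..\<sigma>}|lborel. lam \<nu>)))
      else exp (- (M * (\<sigma> - s))))"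

end

theory Submission
  imports Defs "HOL-Real_Asymp.Real_Asymp"
begin

context
  fixes lam :: "real \<Rightarrow> real"
  assumes lam_nonneg: "\<And>x. 0 \<le> lam x"
    and lam_meas: "lam \<in> borel_measurable borel"
    and lam_int: "\<And>x y. lam integrable_on {x..y}"
begin

lemma nn_int_interval:
  "(\<integral>\<^sup>+\<sigma>. ennreal (lam \<sigma>) * indicator {m..y} \<sigma> \<partial>lborel) = ennreal (integral {m..y} lam)"
proof -
  have "(\<integral>\<^sup>+\<sigma>. ennreal (lam \<sigma>) * indicator {m..y} \<sigma> \<partial>lborel)
      = (\<integral>\<^sup>+\<sigma>. ennreal (indicator {m..y} \<sigma> * lam \<sigma>) \<partial>lborel)"
    by (intro nn_integral_cong) (auto simp: indicator_def)
  also have "\<dots> = ennreal (integral {m..y} lam)"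
  proof (rule nn_integral_has_integral_lborel)
    show "(\<lambda>\<sigma>. indicator {m..y} \<sigma> * lam \<sigma>) \<in> borel_measurable borel"
      using lam_meas by measurable
    show "0 \<le> indicator {m..y} x * lam x" for x using lam_nonneg by (auto simp: indicator_def)
    have "(lam has_integral integral {m..y} lam) {m..y}" using lam_int by (rule integrable_integral)
    then have "((\<lambda>x. if x \<in> {m..y} then lam x else 0) has_integral integral {m..y} lam) UNIV"
      by (subst has_integral_restrict_UNIV)
    then show "((\<lambda>\<sigma>. indicator {m..y} \<sigma> * lam \<sigma>) has_integral integral {m..y} lam) UNIV"
      by (rule has_integral_eq[rotated]) (auto simp: indicator_def)
  qed
  finally show ?thesis .
qed

lemma g_nonneg: "0 \<le> integral {\<sigma>..y} lam"
  using lam_int lam_nonneg by (intro integral_nonneg) auto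

lemma g_antimono: "\<sigma>1 \<le> \<sigma>2 \<Longrightarrow> integral {\<sigma>2..y} lam \<le> integral {\<sigma>1..y} lam"
proof (cases "\<sigma>2 \<le> y")
  case True
  assume "\<sigma>1 \<le> \<sigma>2"
  then have "integral {\<sigma>1..\<sigma>2} lam + integral {\<sigma>2..y} lam = integral {\<sigma>1..y} lam"
    using True lam_int by (intro Henstock_Kurzweil_Integration.integral_combine) auto
  moreover have "0 \<le> integral {\<sigma>1..\<sigma>2} lam" by (rule g_nonneg)
  ultimately show ?thesis by linarith
next
  case False
  then show ?thesis using g_nonneg[of \<sigma>1 y] by simp
qed

lemma g_meas: "(\<lambda>\<sigma>. integral {\<sigma>..y} lam) \<in> borel_measurable borel"
proof -
  have "mono (\<lambda>\<sigma>. - integral {\<sigma>..y} lam)"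
    by (auto simp: mono_def intro: g_antimono)
  then have "(\<lambda>\<sigma>. - integral {\<sigma>..y} lam) \<in> borel_measurable borel"
    by (rule borel_measurable_mono)
  then have "(\<lambda>\<sigma>. - (- integral {\<sigma>..y} lam)) \<in> borel_measurable borel"
    by measurable
  then show ?thesis by simp
qed

lemma inner_bound:
  assumes u: "0 \<le> u"
  shows "(\<integral>\<^sup>+\<sigma>. ennreal (lam \<sigma>) * indicator {..y} \<sigma> * indicator {integral {\<sigma>..y} lam..} u \<partial>lborel) \<le> ennreal u"
proof -
  define g where "g = (\<lambda>\<sigma>. integral {\<sigma>..y} lam)"
  have gm[measurable]: "g \<in> borel_measurable borel" unfolding g_def by (rule g_meas)
  note lam_meas[measurable]
  define f where "f = (\<lambda>\<sigma>. ennreal (lam \<sigma>) * indicator {..y} \<sigma> * indicator {g \<sigma>..} u)"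
  define fn where "fn = (\<lambda>(n::nat) \<sigma>. f \<sigma> * indicator {y - real n..} \<sigma>)"
  have fm: "fn n \<in> borel_measurable lborel" for n
    unfolding fn_def f_def indicator_def atLeast_iff atMost_iff by measurable
  have inc: "incseq fn"
    unfolding incseq_def le_fun_def fn_def
    by (auto intro!: mult_left_mono simp: indicator_def)
  have sup: "(SUP n. fn n \<sigma>) = f \<sigma>" for \<sigma>
  proof (rule antisym)
    show "(SUP n. fn n \<sigma>) \<le> f \<sigma>"
      by (rule SUP_least) (auto simp: fn_def indicator_def)
    obtain n :: nat where "y - \<sigma> \<le> real n" using real_arch_simple by blast
    then have "fn n \<sigma> = f \<sigma>" by (auto simp: fn_def indicator_def)
    then show "f \<sigma> \<le> (SUP n. fn n \<sigma>)" by (metis SUP_upper UNIV_I)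
  qed
  have each: "(\<integral>\<^sup>+\<sigma>. fn n \<sigma> \<partial>lborel) \<le> ennreal u" for n
  proof -
    define S where "S = {y - real n..y} \<inter> g -` {..u}"
    show ?thesis
    proof (cases "S = {}")
      case True
      then have "fn n \<sigma> = 0" for \<sigma>
        by (auto simp: fn_def f_def S_def indicator_def)
      then show ?thesis by simp
    next
      case False
      have cont: "continuous_on {y - real n..y} g"
        unfolding g_def using lam_int by (rule indefinite_integral_continuous_1')
      have "closed S" unfolding S_def
        by (rule continuous_closed_preimage[OF cont]) auto
      moreover have bdd: "bdd_below S" unfolding S_def by (auto intro: bdd_belowI[where m="y - real n"])
      ultimately have mS: "Inf S \<in> S" using False by (intro closed_contains_Inf)
      define m where "m = Inf S"
      have le: "fn n \<sigma> \<le> ennreal (lam \<sigma>) * indicator {m..y} \<sigma>" for \<sigma>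
      proof (cases "\<sigma> \<in> S")
        case True
        then have "m \<le> \<sigma>" unfolding m_def using bdd by (rule cInf_lower)
        then show ?thesis using True by (auto simp: fn_def f_def S_def indicator_def)
      next
        case False
        then show ?thesis by (auto simp: fn_def f_def S_def indicator_def)
      qed
      have "(\<integral>\<^sup>+\<sigma>. fn n \<sigma> \<partial>lborel) \<le> (\<integral>\<^sup>+\<sigma>. ennreal (lam \<sigma>) * indicator {m..y} \<sigma> \<partial>lborel)"
        by (rule nn_integral_mono) (rule le)
      also have "\<dots> = ennreal (g m)" unfolding g_def by (rule nn_int_interval)
      also have "\<dots> \<le> ennreal u" using mS unfolding m_def S_def by (auto intro: ennreal_leI)
      finally show ?thesis .
    qed
  qed
  have "(\<integral>\<^sup>+\<sigma>. f \<sigma> \<partial>lborel) = (\<integral>\<^sup>+\<sigma>. (SUP n. fn n \<sigma>) \<partial>lborel)"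
    using sup by simp
  also have "\<dots> = (SUP n. \<integral>\<^sup>+\<sigma>. fn n \<sigma> \<partial>lborel)"
    by (rule nn_integral_monotone_convergence_SUP[OF inc fm])
  also have "\<dots> \<le> ennreal u" by (rule SUP_least) (rule each)
  finally show ?thesis unfolding f_def g_def .
qed

lemma expint:
  fixes a w :: real assumes a: "a > 0"
  shows "(\<integral>\<^sup>+u. ennreal (a*exp(-a*u)) * indicator {w..} u \<partial>lborel) = ennreal (exp (-a*w))"
proof -
  have "(\<integral>\<^sup>+u. ennreal (a*exp(-a*u)) * indicator {w..} u \<partial>lborel) = 0 - (- exp (-a*w))"
  proof (rule nn_integral_FTC_atLeast[where F="\<lambda>u. - exp (-a*u)" and T=0])
    show "((\<lambda>u. - exp (-a*u)) \<longlongrightarrow> 0) at_top" using a by real_asymp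
    fix x show "((\<lambda>u. - exp (-a*u)) has_real_derivative a*exp(-a*x)) (at x)"
      using a by (auto intro!: derivative_eq_intros simp: field_simps)
  qed (use a in auto)
  then show ?thesis by simp
qed

lemma ulim:
  fixes a :: real assumes a: "a > 0"
  shows "(\<integral>\<^sup>+u. ennreal (a*u*exp(-a*u)) * indicator {0..} u \<partial>lborel) = ennreal (1/a)"
proof -
  have "(\<integral>\<^sup>+u. ennreal (a*u*exp(-a*u)) * indicator {0..} u \<partial>lborel) = 0 - (-(0 + 1/a)*exp(-a*0))"
  proof (rule nn_integral_FTC_atLeast[where F="\<lambda>u. -(u + 1/a)*exp(-a*u)" and T=0])
    show "((\<lambda>u. -(u + 1/a)*exp(-a*u)) \<longlongrightarrow> 0) at_top" using a by real_asymp
    fix x show "((\<lambda>u. -(u + 1/a)*exp(-a*u)) has_real_derivative a*x*exp(-a*x)) (at x)"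
      using a by (auto intro!: derivative_eq_intros simp: field_simps)
  qed (use a in auto)
  then show ?thesis by simp
qed

lemma LC:
  assumes a: "a > 0"
  shows "(\<integral>\<^sup>+\<sigma>. ennreal (lam \<sigma> * exp (-a * integral {\<sigma>..y} lam)) * indicator {..y} \<sigma> \<partial>lborel) \<le> ennreal (1/a)"
proof -
  define g where "g = (\<lambda>\<sigma>. integral {\<sigma>..y} lam)"
  have gm[measurable]: "g \<in> borel_measurable borel" unfolding g_def by (rule g_meas)
  note lam_meas[measurable]
  define h where "h = (\<lambda>\<sigma> u. ennreal (lam \<sigma>) * indicator {..y} \<sigma> * (ennreal (a*exp(-a*u)) * indicator {g \<sigma>..} u))"
  have step1: "ennreal (lam \<sigma> * exp (-a * g \<sigma>)) * indicator {..y} \<sigma> = (\<integral>\<^sup>+u. h \<sigma> u \<partial>lborel)" for \<sigma>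
  proof -
    have "(\<integral>\<^sup>+u. h \<sigma> u \<partial>lborel) = ennreal (lam \<sigma>) * indicator {..y} \<sigma> * (\<integral>\<^sup>+u. ennreal (a*exp(-a*u)) * indicator {g \<sigma>..} u \<partial>lborel)"
      unfolding h_def by (rule nn_integral_cmult) measurable
    also have "\<dots> = ennreal (lam \<sigma>) * indicator {..y} \<sigma> * ennreal (exp (-a * g \<sigma>))"
      using expint[OF a] by simp
    finally show ?thesis using lam_nonneg by (simp add: ennreal_mult mult_ac)
  qed
  have hm: "(\<lambda>p. h (snd p) (fst p)) \<in> borel_measurable (lborel \<Otimes>\<^sub>M lborel)"
    unfolding h_def indicator_def atLeast_iff atMost_iff by measurable
  have "(\<lambda>(x,y). h y x) = (\<lambda>p. h (snd p) (fst p))" by auto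
  with hm have hm': "(\<lambda>(x,y). h y x) \<in> borel_measurable (lborel \<Otimes>\<^sub>M lborel)" by simp
  have inner: "(\<integral>\<^sup>+\<sigma>. h \<sigma> u \<partial>lborel) \<le> ennreal (a*u*exp(-a*u)) * indicator {0..} u" for u
  proof (cases "0 \<le> u")
    case True
    have "(\<integral>\<^sup>+\<sigma>. h \<sigma> u \<partial>lborel) = ennreal (a*exp(-a*u)) * (\<integral>\<^sup>+\<sigma>. ennreal (lam \<sigma>) * indicator {..y} \<sigma> * indicator {g \<sigma>..} u \<partial>lborel)"
      unfolding h_def
      by (subst nn_integral_cmult[symmetric]) (unfold indicator_def atLeast_iff atMost_iff, measurable, auto intro!: nn_integral_cong simp: mult_ac)
    also have "\<dots> \<le> ennreal (a*exp(-a*u)) * ennreal u"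
      by (intro mult_left_mono) (use inner_bound[OF True, of y] in \<open>simp_all add: g_def\<close>)
    also have "\<dots> = ennreal (a*u*exp(-a*u)) * indicator {0..} u"
      using True a by (simp add: ennreal_mult[symmetric] mult_ac)
    finally show ?thesis .
  next
    case False
    have "h \<sigma> u = 0" for \<sigma>
      using False g_nonneg[of \<sigma> y] by (auto simp: h_def g_def indicator_def)
    then show ?thesis by simp
  qed
  have "(\<integral>\<^sup>+\<sigma>. ennreal (lam \<sigma> * exp (-a * g \<sigma>)) * indicator {..y} \<sigma> \<partial>lborel) = (\<integral>\<^sup>+\<sigma>. \<integral>\<^sup>+u. h \<sigma> u \<partial>lborel \<partial>lborel)"
    using step1 by simp
  also have "\<dots> = (\<integral>\<^sup>+u. \<integral>\<^sup>+\<sigma>. h \<sigma> u \<partial>lborel \<partial>lborel)"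
    using lborel_pair.Fubini'[OF hm'] by simp
  also have "\<dots> \<le> (\<integral>\<^sup>+u. ennreal (a*u*exp(-a*u)) * indicator {0..} u \<partial>lborel)"
    by (rule nn_integral_mono) (rule inner)
  also have "\<dots> = ennreal (1/a)" by (rule ulim[OF a])
  finally show ?thesis unfolding g_def .
qed

lemma Blemma:
  fixes \<Phi> :: "real \<Rightarrow> real"
  assumes a: "a > 0" and low: "\<And>x y. x \<le> y \<Longrightarrow> a * integral {x..y} lam \<le> \<Phi> y - \<Phi> x"
  shows "(\<integral>\<^sup>+\<sigma>. ennreal (lam \<sigma> * exp (\<Phi> \<sigma>)) * indicator {..y} \<sigma> \<partial>lborel) \<le> ennreal (exp (\<Phi> y) / a)"
proof -
  note lam_meas[measurable]
  have gm[measurable]: "(\<lambda>\<sigma>. integral {\<sigma>..y} lam) \<in> borel_measurable borel" by (rule g_meas)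
  have pw: "ennreal (lam \<sigma> * exp (\<Phi> \<sigma>)) * indicator {..y} \<sigma>
      \<le> ennreal (exp (\<Phi> y)) * (ennreal (lam \<sigma> * exp (-a * integral {\<sigma>..y} lam)) * indicator {..y} \<sigma>)" for \<sigma>
  proof (cases "\<sigma> \<le> y")
    case True
    have "\<Phi> \<sigma> \<le> \<Phi> y + (-a * integral {\<sigma>..y} lam)" using low[OF True] by simp
    then have "exp (\<Phi> \<sigma>) \<le> exp (\<Phi> y) * exp (-a * integral {\<sigma>..y} lam)"
      by (simp add: exp_add[symmetric])
    then have "lam \<sigma> * exp (\<Phi> \<sigma>) \<le> exp (\<Phi> y) * (lam \<sigma> * exp (-a * integral {\<sigma>..y} lam))"
      using lam_nonneg[of \<sigma>] by (metis mult.left_commute mult_left_mono)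
    then show ?thesis using True lam_nonneg[of \<sigma>]
      by (simp add: ennreal_mult[symmetric] ennreal_leI)
  qed simp
  have "(\<integral>\<^sup>+\<sigma>. ennreal (lam \<sigma> * exp (\<Phi> \<sigma>)) * indicator {..y} \<sigma> \<partial>lborel)
     \<le> (\<integral>\<^sup>+\<sigma>. ennreal (exp (\<Phi> y)) * (ennreal (lam \<sigma> * exp (-a * integral {\<sigma>..y} lam)) * indicator {..y} \<sigma>) \<partial>lborel)"
    by (rule nn_integral_mono) (rule pw)
  also have "\<dots> = ennreal (exp (\<Phi> y)) * (\<integral>\<^sup>+\<sigma>. ennreal (lam \<sigma> * exp (-a * integral {\<sigma>..y} lam)) * indicator {..y} \<sigma> \<partial>lborel)"
    by (rule nn_integral_cmult) measurable
  also have "\<dots> \<le> ennreal (exp (\<Phi> y)) * ennreal (1/a)"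
    by (intro mult_left_mono LC a) simp
  also have "\<dots> = ennreal (exp (\<Phi> y) / a)" using a by (simp add: ennreal_mult[symmetric])
  finally show ?thesis .
qed

end

lemma exp_right:
  fixes r x0 :: real assumes r: "r > 0"
  shows "(\<integral>\<^sup>+x. ennreal (exp (-r*(x-x0))) * indicator {x0..} x \<partial>lborel) = ennreal (1/r)"
proof -
  have "(\<integral>\<^sup>+x. ennreal (exp (-r*(x-x0))) * indicator {x0..} x \<partial>lborel) = 0 - (- exp (-r*(x0-x0))/r)"
  proof (rule nn_integral_FTC_atLeast[where F="\<lambda>x. - exp (-r*(x-x0))/r" and T=0])
    show "((\<lambda>x. - exp (-r*(x-x0))/r) \<longlongrightarrow> 0) at_top" using r by real_asymp
    fix x show "((\<lambda>x. - exp (-r*(x-x0))/r) has_real_derivative exp (-r*(x-x0))) (at x)"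
      using r by (auto intro!: derivative_eq_intros simp: field_simps)
  qed auto
  then show ?thesis by simp
qed

lemma exp_left:
  fixes r x0 :: real assumes r: "r > 0"
  shows "(\<integral>\<^sup>+x. ennreal (exp (r*(x-x0))) * indicator {..x0} x \<partial>lborel) = ennreal (1/r)"
proof -
  have "(\<integral>\<^sup>+x. ennreal (exp (r*(x-x0))) * indicator {..x0} x \<partial>lborel)
     = (\<integral>\<^sup>+x. ennreal (exp (-r*(x-x0))) * indicator {x0..} x \<partial>lborel)"
    apply (subst nn_integral_real_affine[where c="-1" and t="2*x0"])
      apply (auto intro!: nn_integral_cong simp: indicator_def algebra_simps)
    done
  then show ?thesis using exp_right[OF r] by simp
qed


context
  fixes lam :: "real \<Rightarrow> real" and L a c2 M :: real and N :: nat and \<Phi> :: "real \<Rightarrow> real"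
  assumes lam_nonneg: "\<And>x. 0 \<le> lam x"
    and lam_meas: "lam \<in> borel_measurable borel"
    and lam_int: "\<And>x y. lam integrable_on {x..y}"
    and lam_le: "\<And>x. lam x \<le> L"
    and a: "a > 0" and c2: "c2 > 0" and L: "L > 0" and aL: "a * L \<le> 1/2"
    and NM: "real N - M = c2 * L"
    and low: "\<And>x y. x \<le> y \<Longrightarrow> a * integral {x..y} lam \<le> \<Phi> y - \<Phi> x"
    and up: "\<And>x y. x \<le> y \<Longrightarrow> \<Phi> y - \<Phi> x \<le> M * (y - x)"
begin

lemmas B = Blemma[OF lam_nonneg lam_meas lam_int a low]

lemma M_nonneg: "0 \<le> M"
proof -
  have "a * integral {0..1} lam \<le> \<Phi> 1 - \<Phi> 0" using low[of 0 1] by simp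
  moreover have "0 \<le> integral {0..1} lam" using lam_int lam_nonneg by (intro integral_nonneg) auto
  moreover have "\<Phi> 1 - \<Phi> 0 \<le> M" using up[of 0 1] by simp
  moreover have "0 \<le> a * integral {0..1} lam" using a \<open>0 \<le> integral {0..1} lam\<close> by simp
  ultimately show ?thesis by linarith
qed

lemma Phi_mono: "x \<le> y \<Longrightarrow> \<Phi> x \<le> \<Phi> y"
proof -
  assume xy: "x \<le> y"
  have "0 \<le> integral {x..y} lam" using lam_int lam_nonneg by (intro integral_nonneg) auto
  then show ?thesis using low[OF xy] a by (smt (verit) mult_nonneg_nonneg)
qed

lemma Phi_meas[measurable]: "\<Phi> \<in> borel_measurable borel"
proof -
  have "continuous_on UNIV \<Phi>"
  proof (rule lipschitz_on_continuous_on)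
    show "M-lipschitz_on UNIV \<Phi>"
    proof (rule lipschitz_onI)
      fix x y :: real
      show "dist (\<Phi> x) (\<Phi> y) \<le> M * dist x y"
      proof (cases "x \<le> y")
        case True then show ?thesis using up[OF True] Phi_mono[OF True] by (simp add: dist_real_def)
      next
        case False then have "y \<le> x" by simp
        then show ?thesis using up[OF \<open>y \<le> x\<close>] Phi_mono[OF \<open>y \<le> x\<close>] by (simp add: dist_real_def)
      qed
    qed (rule M_nonneg)
  qed
  then show ?thesis by (rule borel_measurable_continuous_onI)
qed

lemma inner_tau:
  assumes Qc: "0 \<le> Qc"
  shows "(\<integral>\<^sup>+\<sigma>. ennreal (Qc * (Ekern N lam \<tau> \<sigma> * exp (\<Phi> \<sigma>))) \<partial>lborel)
     \<le> ennreal (Qc * (lam \<tau> * exp (\<Phi> \<tau>) * (1/c2 + L + 1/a)))"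
proof -
  note lam_meas[measurable]
  define k where "k = lam \<tau>^2 * exp (\<Phi> \<tau>)"
  have k0: "0 \<le> k" unfolding k_def by simp
  define f1 where "f1 = (\<lambda>\<sigma>. ennreal k * (ennreal (exp (-(real N - M)*(\<sigma>-\<tau>))) * indicator {\<tau>..} \<sigma>))"
  define f2 where "f2 = (\<lambda>\<sigma>. ennreal k * (ennreal (exp (1*(\<sigma>-\<tau>))) * indicator {..\<tau>} \<sigma>))"
  define f3 where "f3 = (\<lambda>\<sigma>. ennreal (lam \<tau>) * (ennreal (lam \<sigma> * exp (\<Phi> \<sigma>)) * indicator {..\<tau>} \<sigma>))"
  define H where "H = (\<lambda>\<sigma>. f1 \<sigma> + f2 \<sigma> + f3 \<sigma>)"
  have m1[measurable]: "f1 \<in> borel_measurable lborel" unfolding f1_def by measurable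
  have m2[measurable]: "f2 \<in> borel_measurable lborel" unfolding f2_def by measurable
  have m3[measurable]: "f3 \<in> borel_measurable lborel" unfolding f3_def by measurable
  have pw: "ennreal (Qc * (Ekern N lam \<tau> \<sigma> * exp (\<Phi> \<sigma>))) \<le> ennreal Qc * H \<sigma>" for \<sigma>
  proof -
    have "Ekern N lam \<tau> \<sigma> * exp (\<Phi> \<sigma>) \<le>
       k * (exp (-(real N - M)*(\<sigma>-\<tau>)) * indicator {\<tau>..} \<sigma>)
     + k * (exp (1*(\<sigma>-\<tau>)) * indicator {..\<tau>} \<sigma>)
     + lam \<tau> * (lam \<sigma> * exp (\<Phi> \<sigma>) * indicator {..\<tau>} \<sigma>)"
    proof (cases "\<tau> \<le> \<sigma>")
      case True
      have "exp (\<Phi> \<sigma>) \<le> exp (\<Phi> \<tau> + M * (\<sigma> - \<tau>))" using up[OF True] by simp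
      then have "exp (real N * (\<tau> - \<sigma>)) * exp (\<Phi> \<sigma>) \<le> exp (real N * (\<tau> - \<sigma>)) * exp (\<Phi> \<tau> + M * (\<sigma> - \<tau>))"
        by (simp)
      also have "\<dots> = exp (\<Phi> \<tau>) * exp (-(real N - M)*(\<sigma>-\<tau>))"
        by (simp add: exp_add[symmetric] algebra_simps)
      finally have "lam \<tau>^2 * (exp (real N * (\<tau> - \<sigma>)) * exp (\<Phi> \<sigma>)) \<le> lam \<tau>^2 * (exp (\<Phi> \<tau>) * exp (-(real N - M)*(\<sigma>-\<tau>)))"
        by (intro mult_left_mono) auto
      then show ?thesis using True k0 lam_nonneg[of \<tau>] lam_nonneg[of \<sigma>]
        by (auto simp: Ekern_def k_def indicator_def mult_ac)
    next
      case False
      then have st: "\<sigma> \<le> \<tau>" by simp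
      have F: "exp (\<Phi> \<sigma>) \<le> exp (\<Phi> \<tau>)" using Phi_mono[OF st] by simp
      have "lam \<tau> * (lam \<tau> * exp (\<sigma> - \<tau>) * exp (\<Phi> \<sigma>)) \<le> lam \<tau> * (lam \<tau> * exp (\<sigma> - \<tau>) * exp (\<Phi> \<tau>))"
        using F lam_nonneg[of \<tau>] by (intro mult_left_mono) auto
      then show ?thesis using False k0 lam_nonneg[of \<tau>] lam_nonneg[of \<sigma>]
        by (auto simp: Ekern_def k_def indicator_def algebra_simps power2_eq_square)
    qed
    then have "ennreal (Qc * (Ekern N lam \<tau> \<sigma> * exp (\<Phi> \<sigma>))) \<le> ennreal (Qc * (
       k * (exp (-(real N - M)*(\<sigma>-\<tau>)) * indicator {\<tau>..} \<sigma>)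
     + k * (exp (1*(\<sigma>-\<tau>)) * indicator {..\<tau>} \<sigma>)
     + lam \<tau> * (lam \<sigma> * exp (\<Phi> \<sigma>) * indicator {..\<tau>} \<sigma>)))"
      using Qc by (intro ennreal_leI mult_left_mono)
    also have "\<dots> = ennreal Qc * H \<sigma>"
      using Qc k0 lam_nonneg[of \<tau>] lam_nonneg[of \<sigma>]
      by (simp add: H_def f1_def f2_def f3_def ennreal_mult ennreal_plus indicator_def)
    finally show ?thesis .
  qed
  have NM0: "0 < real N - M" using NM c2 L by simp
  have "(\<integral>\<^sup>+\<sigma>. H \<sigma> \<partial>lborel) =
      ennreal k * (\<integral>\<^sup>+\<sigma>. ennreal (exp (-(real N - M)*(\<sigma>-\<tau>))) * indicator {\<tau>..} \<sigma> \<partial>lborel)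
    + ennreal k * (\<integral>\<^sup>+\<sigma>. ennreal (exp (1*(\<sigma>-\<tau>))) * indicator {..\<tau>} \<sigma> \<partial>lborel)
    + ennreal (lam \<tau>) * (\<integral>\<^sup>+\<sigma>. ennreal (lam \<sigma> * exp (\<Phi> \<sigma>)) * indicator {..\<tau>} \<sigma> \<partial>lborel)"
  proof -
    have "(\<integral>\<^sup>+\<sigma>. H \<sigma> \<partial>lborel) = (\<integral>\<^sup>+\<sigma>. f1 \<sigma> + f2 \<sigma> \<partial>lborel) + (\<integral>\<^sup>+\<sigma>. f3 \<sigma> \<partial>lborel)"
      unfolding H_def by (rule nn_integral_add) measurable
    also have "(\<integral>\<^sup>+\<sigma>. f1 \<sigma> + f2 \<sigma> \<partial>lborel) = (\<integral>\<^sup>+\<sigma>. f1 \<sigma> \<partial>lborel) + (\<integral>\<^sup>+\<sigma>. f2 \<sigma> \<partial>lborel)"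
      by (rule nn_integral_add) measurable
    also have "(\<integral>\<^sup>+\<sigma>. f1 \<sigma> \<partial>lborel) = ennreal k * (\<integral>\<^sup>+\<sigma>. ennreal (exp (-(real N - M)*(\<sigma>-\<tau>))) * indicator {\<tau>..} \<sigma> \<partial>lborel)"
      unfolding f1_def by (rule nn_integral_cmult) measurable
    also have "(\<integral>\<^sup>+\<sigma>. f2 \<sigma> \<partial>lborel) = ennreal k * (\<integral>\<^sup>+\<sigma>. ennreal (exp (1*(\<sigma>-\<tau>))) * indicator {..\<tau>} \<sigma> \<partial>lborel)"
      unfolding f2_def by (rule nn_integral_cmult) measurable
    also have "(\<integral>\<^sup>+\<sigma>. f3 \<sigma> \<partial>lborel) = ennreal (lam \<tau>) * (\<integral>\<^sup>+\<sigma>. ennreal (lam \<sigma> * exp (\<Phi> \<sigma>)) * indicator {..\<tau>} \<sigma> \<partial>lborel)"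
      unfolding f3_def by (rule nn_integral_cmult) measurable
    finally show ?thesis .
  qed
  also have "\<dots> \<le> ennreal k * ennreal (1/(real N - M)) + ennreal k * ennreal (1/1)
      + ennreal (lam \<tau>) * ennreal (exp (\<Phi> \<tau>) / a)"
    unfolding exp_right[OF NM0, of \<tau>] exp_left[OF zero_less_one, of \<tau>]
    by (rule add_mono[OF order_refl mult_left_mono[OF B[of \<tau>]]]) simp_all
  also have "\<dots> = ennreal (k / (real N - M) + k + lam \<tau> * (exp (\<Phi> \<tau>) / a))"
  proof -
    have e1: "ennreal k * ennreal (1/(real N - M)) = ennreal (k/(real N - M))"
      using k0 NM0 by (subst ennreal_mult[symmetric]) auto
    have e3: "ennreal (lam \<tau>) * ennreal (exp (\<Phi> \<tau>) / a) = ennreal (lam \<tau> * (exp (\<Phi> \<tau>) / a))"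
      using lam_nonneg[of \<tau>] a by (subst ennreal_mult[symmetric]) auto
    have p1: "0 \<le> k/(real N - M)" using k0 NM0 by simp
    have p3: "0 \<le> lam \<tau> * (exp (\<Phi> \<tau>) / a)" using lam_nonneg[of \<tau>] a by simp
    show ?thesis unfolding e1 e3 using p1 p3 k0 by (simp add: ennreal_plus)
  qed
  also have "\<dots> \<le> ennreal (lam \<tau> * exp (\<Phi> \<tau>) * (1/c2 + L + 1/a))"
  proof (rule ennreal_leI)
    have l: "lam \<tau> \<le> L" "0 \<le> lam \<tau>" by (rule lam_le lam_nonneg)+
    have e: "0 < exp (\<Phi> \<tau>)" by simp
    have "k / (real N - M) = (lam \<tau> * exp (\<Phi> \<tau>)) * (lam \<tau> / (c2 * L))"
      unfolding k_def NM by (simp add: power2_eq_square)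
    also have "\<dots> \<le> (lam \<tau> * exp (\<Phi> \<tau>)) * (1 / c2)"
      using l c2 L e by (intro mult_left_mono) (auto simp: field_simps)
    finally have 1: "k / (real N - M) \<le> (lam \<tau> * exp (\<Phi> \<tau>)) * (1 / c2)" .
    have 2: "k \<le> (lam \<tau> * exp (\<Phi> \<tau>)) * L"
      unfolding k_def using l e by (simp add: power2_eq_square mult_ac mult_left_mono mult_right_mono)
    show "k / (real N - M) + k + lam \<tau> * (exp (\<Phi> \<tau>) / a) \<le> lam \<tau> * exp (\<Phi> \<tau>) * (1/c2 + L + 1/a)"
      using 1 2 by (simp add: algebra_simps)
  qed
  finally have HI: "(\<integral>\<^sup>+\<sigma>. H \<sigma> \<partial>lborel) \<le> ennreal (lam \<tau> * exp (\<Phi> \<tau>) * (1/c2 + L + 1/a))" .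
  have "(\<integral>\<^sup>+\<sigma>. ennreal (Qc * (Ekern N lam \<tau> \<sigma> * exp (\<Phi> \<sigma>))) \<partial>lborel) \<le> (\<integral>\<^sup>+\<sigma>. ennreal Qc * H \<sigma> \<partial>lborel)"
    by (rule nn_integral_mono) (rule pw)
  also have "\<dots> = ennreal Qc * (\<integral>\<^sup>+\<sigma>. H \<sigma> \<partial>lborel)"
    unfolding H_def by (rule nn_integral_cmult) measurable
  also have "\<dots> \<le> ennreal Qc * ennreal (lam \<tau> * exp (\<Phi> \<tau>) * (1/c2 + L + 1/a))"
    by (intro mult_left_mono HI) simp
  also have "\<dots> = ennreal (Qc * (lam \<tau> * exp (\<Phi> \<tau>) * (1/c2 + L + 1/a)))"
  proof -
    have "0 \<le> lam \<tau> * exp (\<Phi> \<tau>) * (1/c2 + L + 1/a)"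
      using lam_nonneg[of \<tau>] c2 L a by (intro mult_nonneg_nonneg add_nonneg_nonneg) auto
    then show ?thesis by (rule ennreal_mult[OF Qc, symmetric])
  qed
  finally show ?thesis .
qed

lemma outer:
  "(\<integral>\<^sup>+\<tau>. (\<integral>\<^sup>+\<sigma>. ennreal (Ekern3 N lam t \<tau> \<sigma> * exp (\<Phi> \<sigma>)) \<partial>lborel) \<partial>lborel)
     \<le> ennreal ((1/c2 + L + 1/a) * (1/a + 1/c2) * exp (\<Phi> t))"
proof -
  note lam_meas[measurable]
  define K1 where "K1 = 1/c2 + L + 1/a"
  have K1: "0 \<le> K1" unfolding K1_def using c2 L a by (intro add_nonneg_nonneg) auto
  define Q where "Q = (\<lambda>\<tau>. Qmn N 0 (exp (t - \<tau>)))"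
  have Q0: "0 \<le> Q \<tau>" for \<tau> unfolding Q_def Qmn_def by simp
  have NM0: "0 < real N - M" using NM c2 L by simp
  define P1 where "P1 = (\<lambda>\<tau>. ennreal (lam \<tau> * exp (\<Phi> \<tau>)) * indicator {..t} \<tau>)"
  define P2 where "P2 = (\<lambda>\<tau>. ennreal (L * exp (\<Phi> t)) * (ennreal (exp (-(real N - M)*(\<tau>-t))) * indicator {t..} \<tau>))"
  have m1[measurable]: "P1 \<in> borel_measurable lborel" unfolding P1_def by measurable
  have m2[measurable]: "P2 \<in> borel_measurable lborel" unfolding P2_def by measurable
  have pw: "Q \<tau> * (lam \<tau> * exp (\<Phi> \<tau>)) \<le> lam \<tau> * exp (\<Phi> \<tau>) * indicator {..t} \<tau>
      + L * exp (\<Phi> t) * (exp (-(real N - M)*(\<tau>-t)) * indicator {t..} \<tau>)" for \<tau>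
  proof (cases "\<tau> \<le> t")
    case True
    then have "Q \<tau> = 1" unfolding Q_def Qmn_def by auto
    then show ?thesis using True L by (simp add: indicator_def)
  next
    case False
    then have Qe: "Q \<tau> = exp (real N * (t - \<tau>))" unfolding Q_def Qmn_def
      by (simp add: exp_of_nat_mult)
    have "exp (\<Phi> \<tau>) \<le> exp (\<Phi> t + M * (\<tau> - t))" using up[of t \<tau>] False by simp
    then have "lam \<tau> * exp (\<Phi> \<tau>) \<le> L * exp (\<Phi> t + M * (\<tau> - t))"
      using lam_le[of \<tau>] lam_nonneg[of \<tau>] by (intro mult_mono) auto
    then have "exp (real N * (t - \<tau>)) * (lam \<tau> * exp (\<Phi> \<tau>)) \<le> exp (real N * (t - \<tau>)) * (L * exp (\<Phi> t + M * (\<tau> - t)))"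
      by (intro mult_left_mono) auto
    also have "\<dots> = L * exp (\<Phi> t) * exp (-(real N - M)*(\<tau>-t))"
      by (simp add: exp_add[symmetric] algebra_simps)
    finally show ?thesis using False Qe by (simp add: indicator_def)
  qed
  have step: "(\<integral>\<^sup>+\<sigma>. ennreal (Ekern3 N lam t \<tau> \<sigma> * exp (\<Phi> \<sigma>)) \<partial>lborel) \<le> ennreal K1 * (P1 \<tau> + P2 \<tau>)" for \<tau>
  proof -
    have "(\<integral>\<^sup>+\<sigma>. ennreal (Ekern3 N lam t \<tau> \<sigma> * exp (\<Phi> \<sigma>)) \<partial>lborel)
        = (\<integral>\<^sup>+\<sigma>. ennreal (Q \<tau> * (Ekern N lam \<tau> \<sigma> * exp (\<Phi> \<sigma>))) \<partial>lborel)"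
      unfolding Ekern3_def Q_def by (simp add: mult_ac)
    also have "\<dots> \<le> ennreal (Q \<tau> * (lam \<tau> * exp (\<Phi> \<tau>) * K1))"
      unfolding K1_def by (rule inner_tau[OF Q0])
    also have "\<dots> = ennreal (K1 * (Q \<tau> * (lam \<tau> * exp (\<Phi> \<tau>))))" by (simp add: mult_ac)
    also have "\<dots> \<le> ennreal (K1 * (lam \<tau> * exp (\<Phi> \<tau>) * indicator {..t} \<tau>
      + L * exp (\<Phi> t) * (exp (-(real N - M)*(\<tau>-t)) * indicator {t..} \<tau>)))"
      using pw[of \<tau>] K1 by (intro ennreal_leI mult_left_mono)
    also have "\<dots> = ennreal K1 * (P1 \<tau> + P2 \<tau>)"
    proof -
      have a1: "0 \<le> lam \<tau> * exp (\<Phi> \<tau>) * indicator {..t} \<tau>" using lam_nonneg[of \<tau>] by simp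
      have a2: "0 \<le> L * exp (\<Phi> t) * (exp (-(real N - M)*(\<tau>-t)) * indicator {t..} \<tau>)" using L by simp
      show ?thesis
        using a1 a2 K1 lam_nonneg[of \<tau>] L
        by (simp add: ennreal_mult ennreal_plus P1_def P2_def indicator_def)
    qed
    finally show ?thesis .
  qed
  have "(\<integral>\<^sup>+\<tau>. (\<integral>\<^sup>+\<sigma>. ennreal (Ekern3 N lam t \<tau> \<sigma> * exp (\<Phi> \<sigma>)) \<partial>lborel) \<partial>lborel)
      \<le> (\<integral>\<^sup>+\<tau>. ennreal K1 * (P1 \<tau> + P2 \<tau>) \<partial>lborel)"
    by (rule nn_integral_mono) (rule step)
  also have "\<dots> = ennreal K1 * ((\<integral>\<^sup>+\<tau>. P1 \<tau> \<partial>lborel) + (\<integral>\<^sup>+\<tau>. P2 \<tau> \<partial>lborel))"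
  proof -
    have "(\<integral>\<^sup>+\<tau>. ennreal K1 * (P1 \<tau> + P2 \<tau>) \<partial>lborel) = ennreal K1 * (\<integral>\<^sup>+\<tau>. P1 \<tau> + P2 \<tau> \<partial>lborel)"
      by (rule nn_integral_cmult) measurable
    also have "(\<integral>\<^sup>+\<tau>. P1 \<tau> + P2 \<tau> \<partial>lborel) = (\<integral>\<^sup>+\<tau>. P1 \<tau> \<partial>lborel) + (\<integral>\<^sup>+\<tau>. P2 \<tau> \<partial>lborel)"
      by (rule nn_integral_add) measurable
    finally show ?thesis .
  qed
  also have "(\<integral>\<^sup>+\<tau>. P2 \<tau> \<partial>lborel) = ennreal (L * exp (\<Phi> t)) * ennreal (1/(real N - M))"
  proof -
    have "(\<integral>\<^sup>+\<tau>. P2 \<tau> \<partial>lborel) = ennreal (L * exp (\<Phi> t)) * (\<integral>\<^sup>+\<tau>. ennreal (exp (-(real N - M)*(\<tau>-t))) * indicator {t..} \<tau> \<partial>lborel)"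
      unfolding P2_def by (rule nn_integral_cmult) measurable
    then show ?thesis by (simp only: exp_right[OF NM0])
  qed
  also have "\<dots> = ennreal (exp (\<Phi> t) / c2)"
    using L NM0 c2 by (subst ennreal_mult[symmetric]) (auto simp: NM field_simps)
  also have "(\<integral>\<^sup>+\<tau>. P1 \<tau> \<partial>lborel) \<le> ennreal (exp (\<Phi> t) / a)"
    unfolding P1_def by (rule B)
  finally have "(\<integral>\<^sup>+\<tau>. (\<integral>\<^sup>+\<sigma>. ennreal (Ekern3 N lam t \<tau> \<sigma> * exp (\<Phi> \<sigma>)) \<partial>lborel) \<partial>lborel)
      \<le> ennreal K1 * (ennreal (exp (\<Phi> t) / a) + ennreal (exp (\<Phi> t) / c2))"
    by (simp add: mult_left_mono add_right_mono)
  also have "\<dots> = ennreal (K1 * (1/a + 1/c2) * exp (\<Phi> t))"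
    using K1 a c2 by (simp add: ennreal_mult[symmetric] ennreal_plus[symmetric] field_simps)
  finally show ?thesis unfolding K1_def .
qed

end

lemma lam_integrable_on:
  fixes lam :: "real \<Rightarrow> real"
  assumes "antimono lam" shows "lam integrable_on {x..y}"
proof -
  have "mono_on {x..y} (\<lambda>z. - lam z)" using assms by (auto simp: mono_on_def antimono_def)
  then have "(\<lambda>z. - lam z) integrable_on {x..y}" by (rule integrable_on_mono_on)
  then have "(\<lambda>z. - (- lam z)) integrable_on {x..y}" by (rule integrable_neg)
  then show ?thesis by simp
qed

lemma LINT_eq:
  fixes lam :: "real \<Rightarrow> real"
  assumes meas: "lam \<in> borel_measurable borel" and b: "\<And>x. 0 \<le> lam x \<and> lam x \<le> L"
  shows "(LINT \<nu>:{x..y}|lborel. lam \<nu>) = integral {x..y} lam"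
proof -
  have "set_integrable lborel {x..y} lam"
    unfolding set_integrable_def
  proof (rule integrableI_bounded_set_indicator[where B=L])
    show "lam \<in> borel_measurable lborel" using meas by simp
    show "AE z in lborel. z \<in> {x..y} \<longrightarrow> norm (lam z) \<le> L" using b by (auto intro!: AE_I2)
    show "emeasure lborel {x..y} < \<infinity>" by (cases "x \<le> y") auto
  qed auto
  then show ?thesis by (rule set_borel_integral_eq_integral(2))
qed

theorem lemma3p6:
  fixes N :: nat and \<Lambda>0 c1 c2 M c s t :: real and lam :: "real \<Rightarrow> real"
  assumes "N \<ge> 2" and "\<Lambda>0 > 0"
    and "lam \<in> borel_measurable borel"
    and "antimono lam"
    and "\<And>x. 0 \<le> lam x \<and> lam x \<le> \<Lambda>0"
    and "c1 > 0" and "c2 > 0"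
    and "c1 * \<Lambda>0 \<le> 1/2" and "c2 * \<Lambda>0 \<le> (real N - 1) / 2"
    and "M = real N - c2 * \<Lambda>0"
    and "c = 2 * (3 * \<Lambda>0 / M + 1 / c1 + 1 / c2)\<^sup>2"
  shows "((\<integral>\<^sup>+ \<tau>. (\<integral>\<^sup>+ \<sigma>. ennreal (Ekern3 N lam t \<tau> \<sigma> * SigmaP c1 M lam s \<sigma>) \<partial>lborel) \<partial>lborel)
           \<le> ennreal (c * SigmaP c1 M lam s t))
         \<and> ((\<integral>\<^sup>+ \<tau>. (\<integral>\<^sup>+ \<sigma>. ennreal (Ekern3 N lam t \<tau> \<sigma> * SigmaM c1 M lam \<sigma> s) \<partial>lborel) \<partial>lborel)
           \<le> ennreal (c * SigmaM c1 M lam t s))"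
proof -
  note N2 = assms(1) and L = assms(2) and meas = assms(3) and anti = assms(4) and bnd = assms(5)
    and c1 = assms(6) and c2 = assms(7) and aL = assms(8) and c2L = assms(9) and Mdef = assms(10)
    and cdef = assms(11)
  have nonneg: "\<And>x. 0 \<le> lam x" and le: "\<And>x. lam x \<le> \<Lambda>0" using bnd by auto
  have int: "\<And>x y. lam integrable_on {x..y}" using anti by (rule lam_integrable_on)
  have NM: "real N - M = c2 * \<Lambda>0" using Mdef by simp
  have M32: "M \<ge> 3/2" using Mdef c2L N2 by simp
  have c1LM: "c1 * \<Lambda>0 \<le> M" using aL M32 by linarith
  define G where "G = (\<lambda>x y. integral {x..y} lam)"
  have LI: "\<And>x y. (LINT \<nu>:{x..y}|lborel. lam \<nu>) = G x y"
    unfolding G_def using meas bnd by (rule LINT_eq)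
  have Gc: "\<And>x y z. x \<le> y \<Longrightarrow> y \<le> z \<Longrightarrow> G x z = G x y + G y z"
    unfolding G_def using int by (metis Henstock_Kurzweil_Integration.integral_combine)
  have G0: "\<And>x y. 0 \<le> G x y" unfolding G_def using int nonneg by (intro integral_nonneg) auto
  have key: "\<And>x y. x \<le> y \<Longrightarrow> c1 * G x y \<le> M * (y - x)"
  proof -
    fix x y :: real assume xy: "x \<le> y"
    have "G x y \<le> integral {x..y} (\<lambda>_. \<Lambda>0)"
      unfolding G_def using int le by (intro integral_le) auto
    also have "\<dots> = (y - x) * \<Lambda>0" using xy by simp
    finally have "c1 * G x y \<le> c1 * ((y - x) * \<Lambda>0)" using c1 by (intro mult_left_mono) auto
    also have "\<dots> = (c1 * \<Lambda>0) * (y - x)" by simp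
    also have "\<dots> \<le> M * (y - x)" using c1LM xy by (intro mult_right_mono) auto
    finally show "c1 * G x y \<le> M * (y - x)" .
  qed
  have Kc: "(1/c2 + \<Lambda>0 + 1/c1) * (1/c1 + 1/c2) \<le> c"
  proof -
    define p where "p = 1/c1 + 1/c2"
    have p0: "0 \<le> p" unfolding p_def using c1 c2 by simp
    have "\<Lambda>0 \<le> 1/(2*c1)" using aL c1 by (simp add: field_simps)
    moreover have "1/(2*c1) = (1/c1)/2" by simp
    moreover have "0 \<le> 1/c2" using c2 by simp
    moreover have "3/2*p = 3/2*(1/c1) + 3/2*(1/c2)" unfolding p_def by (simp add: distrib_left)
    ultimately have "1/c2 + \<Lambda>0 + 1/c1 \<le> 3/2 * p" by linarith
    then have "(1/c2 + \<Lambda>0 + 1/c1) * p \<le> 3/2 * p * p" using p0 by (intro mult_right_mono) auto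
    also have "\<dots> \<le> 2 * p^2" using p0 by (simp add: power2_eq_square)
    also have "\<dots> \<le> 2 * (3 * \<Lambda>0 / M + p)^2"
    proof -
      have "0 \<le> 3 * \<Lambda>0 / M" using L M32 by simp
      then have "p \<le> 3 * \<Lambda>0 / M + p" by simp
      then have "p^2 \<le> (3 * \<Lambda>0 / M + p)^2" using p0 by (intro power_mono) auto
      then show ?thesis by simp
    qed
    finally show ?thesis unfolding p_def cdef by (simp add: add.assoc)
  qed
  have final: "\<And>X e. X \<le> ennreal ((1/c2 + \<Lambda>0 + 1/c1) * (1/c1 + 1/c2) * exp e) \<Longrightarrow> X \<le> ennreal (c * exp e)"
  proof -
    fix X e assume "X \<le> ennreal ((1/c2 + \<Lambda>0 + 1/c1) * (1/c1 + 1/c2) * exp e)"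
    also have "\<dots> \<le> ennreal (c * exp e)" using Kc by (intro ennreal_leI mult_right_mono) auto
    finally show "X \<le> ennreal (c * exp e)" .
  qed
  define Pp where "Pp = (\<lambda>\<sigma>. if s \<le> \<sigma> then c1 * G s \<sigma> else M * (\<sigma> - s))"
  have SP: "\<And>\<sigma>. SigmaP c1 M lam s \<sigma> = exp (Pp \<sigma>)"
    unfolding SigmaP_def Pp_def LI by simp
  have lowP: "\<And>x y. x \<le> y \<Longrightarrow> c1 * integral {x..y} lam \<le> Pp y - Pp x"
   and upP: "\<And>x y. x \<le> y \<Longrightarrow> Pp y - Pp x \<le> M * (y - x)"
  proof -
    fix x y :: real assume xy: "x \<le> y"
    have A: "c1 * G x y \<le> Pp y - Pp x \<and> Pp y - Pp x \<le> M * (y - x)"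
    proof (cases "s \<le> x")
      case True
      then show ?thesis using Gc[of s x y] xy key[OF xy] unfolding Pp_def
        by (auto simp: algebra_simps)
    next
      case False
      show ?thesis
      proof (cases "y < s")
        case True
        then show ?thesis using False key[OF xy] unfolding Pp_def
          by (auto simp: algebra_simps)
      next
        case False2: False
        have "c1 * G x y = c1 * G x s + c1 * G s y" using Gc[of x s y] False False2 by (simp add: algebra_simps)
        moreover have "c1 * G x s \<le> M * (s - x)" using key[of x s] False by simp
        moreover have "c1 * G s y \<le> M * (y - s)" using key[of s y] False2 by simp
        ultimately show ?thesis using False False2 unfolding Pp_def
          by (auto simp: algebra_simps)
      qed
    qed
    then show "c1 * integral {x..y} lam \<le> Pp y - Pp x" unfolding G_def by blast
    from A show "Pp y - Pp x \<le> M * (y - x)" by blast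
  qed
  define Pm where "Pm = (\<lambda>\<sigma>. if \<sigma> \<le> s then - (c1 * G \<sigma> s) else - (M * (s - \<sigma>)))"
  have SM: "\<And>\<sigma>. SigmaM c1 M lam \<sigma> s = exp (Pm \<sigma>)"
    unfolding SigmaM_def Pm_def LI by simp
  have lowM: "\<And>x y. x \<le> y \<Longrightarrow> c1 * integral {x..y} lam \<le> Pm y - Pm x"
   and upM: "\<And>x y. x \<le> y \<Longrightarrow> Pm y - Pm x \<le> M * (y - x)"
  proof -
    fix x y :: real assume xy: "x \<le> y"
    have A: "c1 * G x y \<le> Pm y - Pm x \<and> Pm y - Pm x \<le> M * (y - x)"
    proof (cases "y \<le> s")
      case True
      then show ?thesis using Gc[of x y s] xy key[OF xy] unfolding Pm_def
        by (auto simp: algebra_simps)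
    next
      case False
      show ?thesis
      proof (cases "s < x")
        case True
        then show ?thesis using False key[OF xy] unfolding Pm_def
          by (auto simp: algebra_simps)
      next
        case False2: False
        have "c1 * G x y = c1 * G x s + c1 * G s y" using Gc[of x s y] False False2 by (simp add: algebra_simps)
        moreover have "c1 * G x s \<le> M * (s - x)" using key[of x s] False2 by simp
        moreover have "c1 * G s y \<le> M * (y - s)" using key[of s y] False by simp
        ultimately show ?thesis using False False2 unfolding Pm_def
          by (auto simp: algebra_simps)
      qed
    qed
    then show "c1 * integral {x..y} lam \<le> Pm y - Pm x" unfolding G_def by blast
    from A show "Pm y - Pm x \<le> M * (y - x)" by blast
  qed
  have P1: "(\<integral>\<^sup>+ \<tau>. (\<integral>\<^sup>+ \<sigma>. ennreal (Ekern3 N lam t \<tau> \<sigma> * exp (Pp \<sigma>)) \<partial>lborel) \<partial>lborel)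
     \<le> ennreal ((1/c2 + \<Lambda>0 + 1/c1) * (1/c1 + 1/c2) * exp (Pp t))"
    by (rule outer[OF nonneg meas int le c1 c2 L aL NM lowP upP])
  have P2: "(\<integral>\<^sup>+ \<tau>. (\<integral>\<^sup>+ \<sigma>. ennreal (Ekern3 N lam t \<tau> \<sigma> * exp (Pm \<sigma>)) \<partial>lborel) \<partial>lborel)
     \<le> ennreal ((1/c2 + \<Lambda>0 + 1/c1) * (1/c1 + 1/c2) * exp (Pm t))"
    by (rule outer[OF nonneg meas int le c1 c2 L aL NM lowM upM])
  show ?thesis
  proof (rule conjI)
    show "(\<integral>\<^sup>+ \<tau>. (\<integral>\<^sup>+ \<sigma>. ennreal (Ekern3 N lam t \<tau> \<sigma> * SigmaP c1 M lam s \<sigma>) \<partial>lborel) \<partial>lborel)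
           \<le> ennreal (c * SigmaP c1 M lam s t)"
      unfolding SP by (rule final[OF P1])
    show "(\<integral>\<^sup>+ \<tau>. (\<integral>\<^sup>+ \<sigma>. ennreal (Ekern3 N lam t \<tau> \<sigma> * SigmaM c1 M lam \<sigma> s) \<partial>lborel) \<partial>lborel)
           \<le> ennreal (c * SigmaM c1 M lam t s)"
      unfolding SM by (rule final[OF P2])
  qed
qed

end
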